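(* Let $(\Sigma_+,\Sigma_-,N_1,N_2,N_3)$ be a solution of the Wainwright–Hsu system satisfying the constraint, with $N_1=0$ and $N_2,N_3>0$. Then there is a constant $c>0$ such that $N_2(\tau)N_3(\tau)\geq c$ for all $\tau\in[0,\infty)$.
   Context: Wainwright–Hsu system: for functions $N_1,N_2,N_3,\Sigma_+,\Sigma_-$ of $\tau\in\mathbb{R}$ (prime denotes $d/d\tau$), $N_1'=(q-4\Sigma_+)N_1$, $N_2'=(q+2\Sigma_++2\sqrt3\Sigma_-)N_2$, $N_3'=(q+2\Sigma_+-2\sqrt3\Sigma_-)N_3$, $\Sigma_+'=-(2-q)\Sigma_+-3S_+$, $\Sigma_-'=-(2-q)\Sigma_--3S_-$, where $q=2(\Sigma_+^2+\Sigma_-^2)$, $S_+=\frac12[(N_2-N_3)^2-N_1(2N_1-N_2-N_3)]$, $S_-=\frac{\sqrt3}{2}(N_3-N_2)(N_1-N_2-N_3)$, together with the constraint $\Sigma_+^2+\Sigma_-^2+\frac34[N_1^2+N_2^2+N_3^2-2(N_1N_2+N_2N_3+N_1N_3)]=1$. Solutions exist for all $\tau\in\mathbb{R}$. *)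

theory Defs
  imports "HOL-Analysis.Analysis"
begin

definition WH_q :: "real \<Rightarrow> real \<Rightarrow> real" where
  "WH_q Sp Sm = 2 * (Sp\<^sup>2 + Sm\<^sup>2)"

definition WH_Sp :: "real \<Rightarrow> real \<Rightarrow> real \<Rightarrow> real" where
  "WH_Sp n1 n2 n3 = (1/2) * ((n2 - n3)\<^sup>2 - n1 * (2 * n1 - n2 - n3))"

definition WH_Sm :: "real \<Rightarrow> real \<Rightarrow> real \<Rightarrow> real" where
  "WH_Sm n1 n2 n3 = (sqrt 3 / 2) * (n3 - n2) * (n1 - n2 - n3)"

definition WH_constraint :: "real \<Rightarrow> real \<Rightarrow> real \<Rightarrow> real \<Rightarrow> real \<Rightarrow> bool" where
  "WH_constraint n1 n2 n3 sp sm \<longleftrightarrow>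
     sp\<^sup>2 + sm\<^sup>2 + (3/4) * (n1\<^sup>2 + n2\<^sup>2 + n3\<^sup>2 - 2 * (n1 * n2 + n2 * n3 + n1 * n3)) = 1"

definition WH_solution ::
  "(real \<Rightarrow> real) \<Rightarrow> (real \<Rightarrow> real) \<Rightarrow> (real \<Rightarrow> real) \<Rightarrow> (real \<Rightarrow> real) \<Rightarrow> (real \<Rightarrow> real) \<Rightarrow> bool" where
  "WH_solution N1 N2 N3 Sp Sm \<longleftrightarrow>
    (\<forall>t. (N1 has_real_derivative ((WH_q (Sp t) (Sm t) - 4 * Sp t) * N1 t)) (at t)
       \<and> (N2 has_real_derivative ((WH_q (Sp t) (Sm t) + 2 * Sp t + 2 * sqrt 3 * Sm t) * N2 t)) (at t)
       \<and> (N3 has_real_derivative ((WH_q (Sp t) (Sm t) + 2 * Sp t - 2 * sqrt 3 * Sm t) * N3 t)) (at t)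
       \<and> (Sp has_real_derivative (- (2 - WH_q (Sp t) (Sm t)) * Sp t - 3 * WH_Sp (N1 t) (N2 t) (N3 t))) (at t)
       \<and> (Sm has_real_derivative (- (2 - WH_q (Sp t) (Sm t)) * Sm t - 3 * WH_Sm (N1 t) (N2 t) (N3 t))) (at t)
       \<and> WH_constraint (N1 t) (N2 t) (N3 t) (Sp t) (Sm t))"

end

theory Submission
  imports Defs
begin

lemma Walg:
  fixes a b x y r :: real
  assumes r: "r * r = 3" and ne: "s \<noteq> 0" and sd: "s = a + b"
  shows "(((- (2 - 2*(x^2+y^2)) * y - 3 * ((r/2) * (b - a) * (0 - a - b))) * (a - b) +
           ((2*(x^2+y^2) + 2*x + 2 * r * y) * a - (2*(x^2+y^2) + 2*x - 2 * r * y) * b) * y) * s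
          - y * (a - b) * ((2*(x^2+y^2) + 2*x + 2 * r * y) * a + (2*(x^2+y^2) + 2*x - 2 * r * y) * b))
         / (s * s) =
     2 * r * (y^2 - 3/4*(a - b)^2) - (2 - 2*(x^2+y^2)) * (y * (a - b) / s)
      - 2 * r * y^2 * (a - b)^2/s^2"
  using ne apply (simp add: field_simps)
  using r sd by algebra

lemma Wderiv:
  fixes FF GG Sp Sm :: "real \<Rightarrow> real"
  assumes d2: "(FF has_real_derivative ((2*(Sp t^2+Sm t^2) + 2*Sp t + 2 * sqrt 3 * Sm t) * FF t)) (at t)"
   and d3: "(GG has_real_derivative ((2*(Sp t^2+Sm t^2) + 2*Sp t - 2 * sqrt 3 * Sm t) * GG t)) (at t)"
   and dm: "(Sm has_real_derivative (- (2 - 2*(Sp t^2+Sm t^2)) * Sm t - 3 * ((sqrt 3/2) * (GG t - FF t) * (0 - FF t - GG t)))) (at t)"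
   and p: "FF t > 0" "GG t > 0"
  shows "((\<lambda>t. Sm t * (FF t - GG t) / (FF t + GG t)) has_real_derivative
     (2 * sqrt 3 * (Sm t^2 - 3/4*(FF t - GG t)^2) - (2 - 2*(Sp t^2+Sm t^2)) * (Sm t * (FF t - GG t) / (FF t + GG t))
      - 2 * sqrt 3 * Sm t^2*(FF t - GG t)^2/(FF t + GG t)^2)) (at t)"
proof -
  have ne: "FF t + GG t \<noteq> 0" using p by simp
  have s3: "sqrt 3 * sqrt 3 = (3::real)" by simp
  show ?thesis
    apply (rule DERIV_cong[OF DERIV_divide[OF DERIV_mult[OF dm DERIV_diff[OF d2 d3]] DERIV_add[OF d2 d3] ne]])
    by (rule Walg[OF s3 ne refl])
qed

lemma LPderiv:
  fixes FF GG Sp Sm :: "real \<Rightarrow> real"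
  assumes d2: "(FF has_real_derivative ((2*(Sp t^2+Sm t^2) + 2*Sp t + 2 * sqrt 3 * Sm t) * FF t)) (at t)"
   and d3: "(GG has_real_derivative ((2*(Sp t^2+Sm t^2) + 2*Sp t - 2 * sqrt 3 * Sm t) * GG t)) (at t)"
   and p: "FF t > 0" "GG t > 0"
  shows "((\<lambda>t. ln (FF t * GG t)) has_real_derivative 4*(Sp t^2+Sm t^2+Sp t)) (at t)"
proof -
  have dP: "((\<lambda>t. FF t * GG t) has_real_derivative 4*(Sp t^2+Sm t^2+Sp t) * (FF t * GG t)) (at t)"
    by (rule DERIV_cong[OF DERIV_mult[OF d2 d3]]) (simp add: algebra_simps)
  have pp: "0 < FF t * GG t" using p by simp
  from DERIV_chain2[where g="\<lambda>t. FF t * GG t", OF DERIV_ln[OF pp] dP] show ?thesis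
    apply (rule DERIV_cong) using p by (simp add: field_simps)
qed

lemma linq: "(u::real) + 3/4*D = 1 \<Longrightarrow> 0 \<le> D \<Longrightarrow> 0 \<le> 2 - 2*u" by linarith

lemma linq2: "(v::real) + u + 3/4*D = 1 \<Longrightarrow> 0 \<le> D \<Longrightarrow> u \<le> 1 - v" by linarith

lemma g1: "- 2 * (inverse (s::real) / 2 * (- q * e)) = q * (e / s)"
  by (cases "s = 0") (simp_all add: field_simps)

lemma g2: "(2 * r * (A::real) - q * W - 2 * r * B) / r = 2 * A - q * W / r - 2 * B" if "r \<noteq> 0"
  using that by (simp add: field_simps)

lemma g3: "(4::real)*(u+x) - (2 * A - q2 * W / r - 2 * B) + q2 * E = (4*(u+x) - 2*A) + 2*B + q2 * (W / r + E)"
  by (simp add: algebra_simps)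

lemma g4: "(x2::real) + y2 + 3/4*D = 1 \<Longrightarrow> P = x2 + 2*x + 1 \<Longrightarrow> 4*(x2+y2+x) - 2*(y2 - 3/4*D) = 2*P"
  by (simp add: algebra_simps)

lemma g6: "0 \<le> (X::real) - M + Q \<Longrightarrow> - 2 * z = Q \<Longrightarrow> L = M \<Longrightarrow> 0 \<le> X - L - 2 * z"
  by linarith

lemma g7: "(r::real) \<noteq> 0 \<Longrightarrow> (w + r * e) / r = w / r + e"
  by (simp add: field_simps)

lemma keyineq:
  fixes a b x y :: real
  assumes a: "a > 0" and b: "b > 0" and c: "x^2+y^2+3/4*(a-b)^2 = 1" and e: "1+x>0"
  shows "0 \<le> 4*(x^2+y^2+x) - (2 * sqrt 3 * (y^2 - 3/4*(a-b)^2) - (2 - 2*(x^2+y^2)) * (y*(a-b)/(a+b))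
      - 2 * sqrt 3 * y^2*(a-b)^2/(a+b)^2) / sqrt 3
      - 2 * (inverse (sqrt (1+x)) / 2 * (- (2 - 2*(x^2+y^2)) * (1+x)))"
proof -
  define q2 where "q2 = 2 - 2*(x^2+y^2)"
  define A where "A = y^2 - 3/4*(a-b)^2"
  define B where "B = y^2*(a-b)^2/(a+b)^2"
  define E where "E = sqrt (1+x)"
  have r0: "(sqrt 3) \<noteq> 0" by simp
  have q2: "q2 \<ge> 0" unfolding q2_def by (rule linq[OF _ zero_le_power2[of "a-b"]]) (use c in simp)
  have i1: "- 2 * (inverse (sqrt (1+x)) / 2 * (- q2 * (1+x))) = q2 * E"
  proof -
    have h: "(1+x) / sqrt (1+x) = sqrt (1+x)" using e by (simp add: real_div_sqrt)
    show ?thesis unfolding g1 h E_def ..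
  qed
  have bb: "2 * sqrt 3 * y^2*(a-b)^2/(a+b)^2 = 2 * (sqrt 3) * B" unfolding B_def by simp
  have i2: "(2 * (sqrt 3) * A - q2 * (y*(a-b)/(a+b)) - 2 * (sqrt 3) * B) / (sqrt 3) = 2 * A - q2 * (y*(a-b)/(a+b)) / (sqrt 3) - 2 * B"
    using g2[OF r0] .
  have c': "x^2 + y^2 + 3/4*(a-b)^2 = 1" using c .
  have i3: "4*(x^2+y^2+x) - 2 * A = 2*(1+x)^2"
  proof -
    have "(1+x)^2 = x^2 + 2*x + 1" by (simp add: power2_eq_square algebra_simps)
    from g4[OF c this] show ?thesis unfolding A_def .
  qed
  have i4: "\<bar>(y*(a-b)/(a+b))\<bar> \<le> \<bar>y\<bar>"
  proof -
    have "\<bar>a-b\<bar> \<le> a+b" using a b by linarith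
    moreover have "\<bar>(a-b)/(a+b)\<bar> = \<bar>a-b\<bar>/(a+b)" using a b by (simp add: abs_divide)
    ultimately have "\<bar>(a-b)/(a+b)\<bar> \<le> 1" using a b by (simp add: divide_le_eq_1_pos)
    then have "\<bar>y\<bar> * \<bar>(a-b)/(a+b)\<bar> \<le> \<bar>y\<bar>" using mult_left_le[of "\<bar>(a-b)/(a+b)\<bar>" "\<bar>y\<bar>"] by simp
    then show ?thesis by (simp add: abs_mult)
  qed
  have i5: "\<bar>y\<bar> \<le> (sqrt 3) * E"
  proof -
    have y1: "y^2 \<le> 1 - x^2" using linq2[OF _ zero_le_power2[of "a-b"], of "x^2" "y^2"] c by simp
    have "0 \<le> (x+1)*(x+2)" using e by (intro mult_nonneg_nonneg) auto
    moreover have "3*(1+x) - (1 - x^2) = (x+1)*(x+2)" by (simp add: algebra_simps power2_eq_square)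
    ultimately have "1 - x^2 \<le> 3*(1+x)" by linarith
    then have "y^2 \<le> 3*(1+x)" using y1 by linarith
    then have "sqrt (y^2) \<le> sqrt (3*(1+x))" by (rule real_sqrt_le_mono)
    then show ?thesis unfolding E_def real_sqrt_mult by simp
  qed
  have rp: "(sqrt 3) > 0" by simp
  have i6: "0 \<le> (y*(a-b)/(a+b)) / (sqrt 3) + E"
  proof -
    have "- (y*(a-b)/(a+b)) \<le> (sqrt 3) * E" using i4 i5 by linarith
    then have "0 \<le> ((y*(a-b)/(a+b)) + (sqrt 3) * E) / (sqrt 3)" using rp by simp
    moreover have "((y*(a-b)/(a+b)) + (sqrt 3) * E) / (sqrt 3) = (y*(a-b)/(a+b)) / (sqrt 3) + E" using g7[OF r0] .
    ultimately show ?thesis by simp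
  qed
  have "0 \<le> 2*(1+x)^2 + 2*B + q2 * ((y*(a-b)/(a+b)) / (sqrt 3) + E)"
  proof -
    have "0 \<le> B" unfolding B_def by simp
    then show ?thesis using q2 i6 by (simp add: add_nonneg_nonneg)
  qed
  also have "\<dots> = 4*(x^2+y^2+x) - (2 * A - q2 * (y*(a-b)/(a+b)) / (sqrt 3) - 2 * B) + q2 * E"
    unfolding g3 i3 ..
  finally have fin0: "0 \<le> 4*(x^2+y^2+x) - (2 * A - q2 * (y*(a-b)/(a+b)) / (sqrt 3) - 2 * B) + q2 * E" .
  have fin: "0 \<le> 4*(x^2+y^2+x) - (2 * (sqrt 3) * A - q2 * (y*(a-b)/(a+b)) - 2 * (sqrt 3) * B) / (sqrt 3)
      - 2 * (inverse (sqrt (1+x)) / 2 * (- q2 * (1+x)))"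
    by (rule g6[OF fin0 i1 i2])
  note f1 = fin[unfolded bb[symmetric]]
  note f2 = f1[unfolded A_def]
  note f3 = f2[unfolded q2_def]
  note f5 = f3
  show ?thesis by (rule f5)
qed

lemma consl: "(sp::real)\<^sup>2 + sm\<^sup>2 + (3/4) * (0\<^sup>2 + a\<^sup>2 + b\<^sup>2 - 2 * (0 * a + a * b + 0 * b)) = 1 \<Longrightarrow> sp^2 + sm^2 + 3/4*(a-b)^2 = 1"
proof -
  assume h: "sp\<^sup>2 + sm\<^sup>2 + (3/4) * (0\<^sup>2 + a\<^sup>2 + b\<^sup>2 - 2 * (0 * a + a * b + 0 * b)) = 1"
  have "(0::real)\<^sup>2 + a\<^sup>2 + b\<^sup>2 - 2 * (0 * a + a * b + 0 * b) = (a-b)^2" by (simp add: power2_diff)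
  then show ?thesis using h by simp
qed

lemma lA: "(u::real) \<le> 1 - v \<Longrightarrow> 0 \<le> u \<Longrightarrow> v \<le> 1" by linarith
lemma lB: "(u::real) \<le> 1 - v \<Longrightarrow> 0 \<le> v \<Longrightarrow> u \<le> 1" by linarith
lemma lC: assumes "(u::real) \<le> 1 - v" shows "2*(v+u) \<le> 2" using assms by (simp add: algebra_simps)
lemma lD: assumes "(v::real) + u + 3/4*D = 1" shows "3 * ((1/2) * (D - 0 * z)) = 2 - 2*(v+u)"
  using assms by (simp add: algebra_simps)
lemma lE: assumes "\<bar>w::real\<bar> \<le> 1" shows "\<bar>w / sqrt 3\<bar> \<le> 1"
proof -
  have s: "sqrt 3 \<ge> (1::real)" by simp
  have "\<bar>w\<bar> \<le> 1 * sqrt 3" using assms s by linarith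
  then have "\<bar>w\<bar> / sqrt 3 \<le> 1" by (subst pos_divide_le_eq) auto
  then show ?thesis by (simp add: abs_divide)
qed

lemma hnn: "0 \<le> (e::real) \<Longrightarrow> 0 \<le> q \<Longrightarrow> 0 < X \<Longrightarrow> 0 \<le> (- (2 - q) * e) * X + 2 * X * e"
proof -
  assume "0 \<le> e" "0 \<le> q" "0 < X"
  moreover have "(- (2 - q) * e) * X + 2 * X * e = q * e * X" by (simp add: algebra_simps)
  ultimately show ?thesis by simp
qed

lemma knp: "0 \<le> (e::real) \<Longrightarrow> q \<le> 2 \<Longrightarrow> 0 < X \<Longrightarrow> (- (2 - q) * e) * X + (- 2 * X) * e \<le> 0"
proof -
  assume "0 \<le> e" "q \<le> 2" "0 < X"
  moreover have "(- (2 - q) * e) * X + (- 2 * X) * e = - ((4 - q) * e * X)" by (simp add: algebra_simps)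
  ultimately show ?thesis by simp
qed

lemma Wbound:
  fixes a b y :: real
  assumes "a > 0" "b > 0" "y^2 \<le> 1"
  shows "\<bar>y * (a - b) / (a + b) / sqrt 3\<bar> \<le> 1"
proof -
  have "\<bar>a-b\<bar> \<le> a+b" using assms by linarith
  moreover have "\<bar>(a-b)/(a+b)\<bar> = \<bar>a-b\<bar>/(a+b)" using assms by (simp add: abs_divide)
  ultimately have h1: "\<bar>(a-b)/(a+b)\<bar> \<le> 1" using assms by (simp add: divide_le_eq_1_pos)
  have h2: "\<bar>y\<bar> \<le> 1" using assms(3) abs_square_le_1 by blast
  have "\<bar>y\<bar> * \<bar>(a-b)/(a+b)\<bar> \<le> 1 * 1" by (rule mult_mono) (use h1 h2 in auto)
  then have h3: "\<bar>y * (a - b) / (a + b)\<bar> \<le> 1" by (simp add: abs_mult)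
  then show ?thesis by (rule lE)
qed

theorem mainTheorem10:
  fixes N1 N2 N3 Sp Sm :: "real \<Rightarrow> real"
  assumes "WH_solution N1 N2 N3 Sp Sm"
    and "\<forall>t. N1 t = 0"
    and "\<forall>t. N2 t > 0"
    and "\<forall>t. N3 t > 0"
  shows "\<exists>c>0. \<forall>t\<ge>0. N2 t * N3 t \<ge> c"
proof -
  note sol = assms(1)[unfolded WH_solution_def]
  have n1: "\<And>t. N1 t = 0" using assms(2) by blast
  have p2: "\<And>t. N2 t > 0" using assms(3) by blast
  have p3: "\<And>t. N3 t > 0" using assms(4) by blast
  have d2: "\<And>t. (N2 has_real_derivative ((2*(Sp t^2+Sm t^2) + 2*Sp t + 2 * sqrt 3 * Sm t) * N2 t)) (at t)"
    using sol unfolding WH_q_def by blast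
  have d3: "\<And>t. (N3 has_real_derivative ((2*(Sp t^2+Sm t^2) + 2*Sp t - 2 * sqrt 3 * Sm t) * N3 t)) (at t)"
    using sol unfolding WH_q_def by blast
  have dm: "\<And>t. (Sm has_real_derivative (- (2 - 2*(Sp t^2+Sm t^2)) * Sm t - 3 * ((sqrt 3/2) * (N3 t - N2 t) * (0 - N2 t - N3 t)))) (at t)"
  proof -
    fix t
    have "(Sm has_real_derivative (- (2 - WH_q (Sp t) (Sm t)) * Sm t - 3 * WH_Sm (N1 t) (N2 t) (N3 t))) (at t)"
      using sol by blast
    then show "?thesis t" unfolding WH_q_def WH_Sm_def n1 .
  qed
  have cons: "\<And>t. Sp t^2 + Sm t^2 + 3/4*(N2 t - N3 t)^2 = 1"
  proof -
    fix t
    have "WH_constraint (N1 t) (N2 t) (N3 t) (Sp t) (Sm t)" using sol by blast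
    then show "?thesis t" unfolding WH_constraint_def n1 by (rule consl)
  qed
  have dp0: "\<And>t. (Sp has_real_derivative (- (2 - 2*(Sp t^2+Sm t^2)) * Sp t - 3 * ((1/2) * ((N2 t - N3 t)^2 - 0 * (2 * 0 - N2 t - N3 t))))) (at t)"
  proof -
    fix t
    have "(Sp has_real_derivative (- (2 - WH_q (Sp t) (Sm t)) * Sp t - 3 * WH_Sp (N1 t) (N2 t) (N3 t))) (at t)"
      using sol by blast
    then show "?thesis t" unfolding WH_q_def WH_Sp_def n1 .
  qed
  have de: "\<And>t. ((\<lambda>t. 1 + Sp t) has_real_derivative (- (2 - 2*(Sp t^2+Sm t^2)) * (1 + Sp t))) (at t)"
  proof -
    fix t
    have eq: "3 * ((1/2) * ((N2 t - N3 t)^2 - 0 * (2 * 0 - N2 t - N3 t))) = 2 - 2*(Sp t^2+Sm t^2)"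
      by (rule lD[OF cons])
    show "?thesis t"
      by (rule DERIV_cong[OF DERIV_add[OF DERIV_const dp0[of t]]]) (simp only: eq, simp add: algebra_simps)
  qed
  have smb: "\<And>t. Sm t^2 \<le> 1 - Sp t^2"
    by (rule linq2[OF cons zero_le_power2])
  have spb: "\<And>t. Sp t^2 \<le> 1" by (rule lA[OF smb zero_le_power2])
  have smb1: "\<And>t. Sm t^2 \<le> 1" by (rule lB[OF smb zero_le_power2])
  have e_nn: "\<And>t. 0 \<le> 1 + Sp t"
  proof -
    fix t
    have "\<bar>Sp t\<bar> \<le> 1" using spb[of t] abs_square_le_1 by blast
    then show "0 \<le> 1 + Sp t" by linarith
  qed
  have qle: "\<And>t. 2*(Sp t^2+Sm t^2) \<le> 2" by (rule lC[OF smb])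
  have dexp: "\<And>t. ((\<lambda>t. exp (2*t)) has_real_derivative 2*exp(2*t)) (at t)"
    by (auto intro!: derivative_eq_intros)
  have dexpm: "\<And>t. ((\<lambda>t::real. exp (-2*t)) has_real_derivative -2*exp(-2*t)) (at t)"
    by (auto intro!: derivative_eq_intros)
  define e0 where "e0 = 1 + Sp 0"
  show ?thesis
  proof (cases "e0 > 0")
    case True
    have epos: "1 + Sp t > 0" if t: "t \<ge> 0" for t
    proof -
      have "(1 + Sp 0) * exp (2*0) \<le> (1 + Sp t) * exp (2*t)"
      proof (rule DERIV_nonneg_imp_nondecreasing[OF t])
        fix x assume "0 \<le> x" "x \<le> t"
        show "\<exists>y. ((\<lambda>t. (1 + Sp t) * exp (2*t)) has_real_derivative y) (at x) \<and> 0 \<le> y"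
          by (rule exI, rule conjI, rule DERIV_mult[OF de[of x] dexp[of x]],
              rule hnn[OF e_nn]) simp_all
      qed
      then have "0 < (1 + Sp t) * exp (2*t)" using True unfolding e0_def by simp
      then show ?thesis by (simp add: zero_less_mult_iff)
    qed
    define G where "G = (\<lambda>t. ln (N2 t * N3 t) - Sm t * (N2 t - N3 t) / (N2 t + N3 t) / sqrt 3 - 2 * sqrt (1 + Sp t))"
    have Gmono: "G 0 \<le> G t" if t: "t \<ge> 0" for t
      unfolding G_def
    proof (rule DERIV_nonneg_imp_nondecreasing[OF t])
      fix x assume x: "0 \<le> x" "x \<le> t"
      have ex: "1 + Sp x > 0" using epos x by simp
      have dsq: "((\<lambda>t. sqrt (1 + Sp t)) has_real_derivative
          inverse (sqrt (1 + Sp x)) / 2 * (- (2 - 2*(Sp x^2+Sm x^2)) * (1 + Sp x))) (at x)"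
        by (rule DERIV_chain2[where g="\<lambda>t. 1 + Sp t", OF DERIV_real_sqrt[OF ex] de[of x]])
      have D: "((\<lambda>t. ln (N2 t * N3 t) - Sm t * (N2 t - N3 t) / (N2 t + N3 t) / sqrt 3 - 2 * sqrt (1 + Sp t))
          has_real_derivative
          4*(Sp x^2+Sm x^2+Sp x) - (2 * sqrt 3 * (Sm x^2 - 3/4*(N2 x - N3 x)^2) - (2 - 2*(Sp x^2+Sm x^2)) * (Sm x * (N2 x - N3 x) / (N2 x + N3 x))
           - 2 * sqrt 3 * Sm x^2*(N2 x - N3 x)^2/(N2 x + N3 x)^2) / sqrt 3
          - 2 * (inverse (sqrt (1 + Sp x)) / 2 * (- (2 - 2*(Sp x^2+Sm x^2)) * (1 + Sp x)))) (at x)"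
        by (rule DERIV_diff[OF DERIV_diff[OF LPderiv[where FF=N2 and GG=N3 and Sp=Sp and Sm=Sm and t=x, OF d2[of x] d3[of x] p2[of x] p3[of x]]
              DERIV_cdivide[where c="sqrt 3", OF Wderiv[where FF=N2 and GG=N3 and Sp=Sp and Sm=Sm and t=x, OF d2[of x] d3[of x] dm[of x] p2[of x] p3[of x]]]]
              DERIV_cmult[where c=2, OF dsq]])
      have "0 \<le> 4*(Sp x^2+Sm x^2+Sp x) - (2 * sqrt 3 * (Sm x^2 - 3/4*(N2 x - N3 x)^2) - (2 - 2*(Sp x^2+Sm x^2)) * (Sm x * (N2 x - N3 x) / (N2 x + N3 x))
           - 2 * sqrt 3 * Sm x^2*(N2 x - N3 x)^2/(N2 x + N3 x)^2) / sqrt 3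
          - 2 * (inverse (sqrt (1 + Sp x)) / 2 * (- (2 - 2*(Sp x^2+Sm x^2)) * (1 + Sp x)))"
        by (rule keyineq[OF p2[of x] p3[of x] cons[of x] ex])
      with D show "\<exists>y. ((\<lambda>t. ln (N2 t * N3 t) - Sm t * (N2 t - N3 t) / (N2 t + N3 t) / sqrt 3 - 2 * sqrt (1 + Sp t))
          has_real_derivative y) (at x) \<and> 0 \<le> y" by blast
    qed
    define L where "L = ln (N2 0 * N3 0) - 2 - 2 * sqrt e0"
    show ?thesis
    proof (intro exI conjI allI impI)
      show "0 < exp L" by simp
      fix t :: real assume t: "0 \<le> t"
      have w0: "\<bar>Sm 0 * (N2 0 - N3 0) / (N2 0 + N3 0) / sqrt 3\<bar> \<le> 1"
        by (rule Wbound[OF p2 p3]) (rule smb1)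
      have wt: "\<bar>Sm t * (N2 t - N3 t) / (N2 t + N3 t) / sqrt 3\<bar> \<le> 1"
        by (rule Wbound[OF p2 p3]) (rule smb1)
      have "G 0 \<le> G t" by (rule Gmono[OF t])
      then have "ln (N2 0 * N3 0) - Sm 0 * (N2 0 - N3 0) / (N2 0 + N3 0) / sqrt 3 - 2 * sqrt e0
          \<le> ln (N2 t * N3 t) - Sm t * (N2 t - N3 t) / (N2 t + N3 t) / sqrt 3 - 2 * sqrt (1 + Sp t)"
        unfolding G_def e0_def by simp
      moreover have "0 \<le> sqrt (1 + Sp t)" using e_nn[of t] by simp
      ultimately have "L \<le> ln (N2 t * N3 t)" unfolding L_def using w0 wt by linarith
      then have "exp L \<le> exp (ln (N2 t * N3 t))" by simp
      also have "\<dots> = N2 t * N3 t" using p2[of t] p3[of t] by simp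
      finally show "exp L \<le> N2 t * N3 t" .
    qed
  next
    case False
    then have e00: "1 + Sp 0 = 0" using e_nn[of 0] unfolding e0_def by linarith
    have ez: "1 + Sp t = 0" if t: "t \<ge> 0" for t
    proof -
      have "(1 + Sp t) * exp (-2*t) \<le> (1 + Sp 0) * exp (-2*0)"
      proof (rule DERIV_nonpos_imp_nonincreasing[OF t])
        fix x assume "0 \<le> x" "x \<le> t"
        show "\<exists>y. ((\<lambda>t. (1 + Sp t) * exp (-2*t)) has_real_derivative y) (at x) \<and> y \<le> 0"
          by (rule exI, rule conjI, rule DERIV_mult[OF de[of x] dexpm[of x]],
              rule knp[OF e_nn qle]) simp_all
      qed
      then have "(1 + Sp t) * exp (-2*t) \<le> 0" using e00 by simp
      then have "1 + Sp t \<le> 0" by (simp add: mult_le_0_iff)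
      then show ?thesis using e_nn[of t] by linarith
    qed
    show ?thesis
    proof (intro exI conjI allI impI)
      show "0 < N2 0 * N3 0" using p2[of 0] p3[of 0] by simp
      fix t :: real assume t: "0 \<le> t"
      show "N2 0 * N3 0 \<le> N2 t * N3 t"
      proof (rule DERIV_nonneg_imp_nondecreasing[OF t])
        fix x assume x: "0 \<le> x" "x \<le> t"
        have spx: "Sp x = -1" using ez[of x] x by linarith
        have "Sm x^2 \<le> 0" using smb[of x] spx by simp
        then have smx: "Sm x = 0" by simp
        have "((\<lambda>t. N2 t * N3 t) has_real_derivative 4*(Sp x^2+Sm x^2+Sp x) * (N2 x * N3 x)) (at x)"
          by (rule DERIV_cong[OF DERIV_mult[OF d2 d3]]) (simp add: algebra_simps)
        moreover have "4*(Sp x^2+Sm x^2+Sp x) * (N2 x * N3 x) = 0" using spx smx by simp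
        ultimately show "\<exists>y. ((\<lambda>t. N2 t * N3 t) has_real_derivative y) (at x) \<and> 0 \<le> y" by auto
      qed
    qed
  qed
qed

end
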